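(* Let $k\ge1$ and $A\in\mathbb{C}^{k\times k}$ with $\|A-\mathbbm{1}_k\|<1/k$, let $\mathbf{w}=(w_1,\ldots,w_k)^T=A\mathbf{z}$ for $\mathbf{z}=(z_1,\ldots,z_k)^T\in\mathbb{C}^k$, and let $f:\mathbb{C}^k\to\mathbb{C}$ be holomorphic. Then \[ \frac{f(0)}{\det(A)}=\frac{1}{(2\pi i)^k}\oint_{\partial D}\cdots\oint_{\partial D}\frac{f(\mathbf{z})}{w_1\cdots w_k}\,dz_1\cdots dz_k . \]
   Context: $\|\cdot\|$ is the Frobenius norm, $\mathbbm{1}_k$ the identity, $\partial D=\{|z|=1\}$ the counterclockwise unit circle, and the integral is the iterated contour integral over the torus $(\partial D)^k$ in the variables $z_1,\ldots,z_k$. *)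

theory Defs
  imports "HOL-Complex_Analysis.Complex_Analysis"
begin

definition holomorphic_cn :: "(complex^'n \<Rightarrow> complex) \<Rightarrow> bool" where
  "holomorphic_cn f \<longleftrightarrow>
     (\<forall>z. \<exists>L. (f has_derivative L) (at z) \<and> (\<forall>(c::complex) v. L (c *s v) = c * L v))"

definition vec_upd :: "complex^'n \<Rightarrow> 'n \<Rightarrow> complex \<Rightarrow> complex^'n" where
  "vec_upd z i \<zeta> = (\<chi> j. if j = i then \<zeta> else z $ j)"

fun torus_iter :: "'n list \<Rightarrow> (complex^'n \<Rightarrow> complex) \<Rightarrow> complex^'n \<Rightarrow> complex" where
  "torus_iter [] F z = F z"
| "torus_iter (i # is) F z =
     contour_integral (circlepath 0 1) (\<lambda>\<zeta>. torus_iter is F (vec_upd z i \<zeta>))"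

text \<open>Iterated integral dz_1 ... dz_k for an enumeration ord = [1,...,k] of
  the coordinates: z_1 innermost, z_k outermost.\<close>
definition torus_integral :: "'n list \<Rightarrow> (complex^'n \<Rightarrow> complex) \<Rightarrow> complex" where
  "torus_integral ord F = torus_iter (rev ord) F 0"

end

theory Submission
  imports Defs
begin


lemma vec_upd_nth [simp]: "vec_upd z i c $ l = (if l = i then c else z $ l)"
  by (simp add: vec_upd_def)

lemma torus_iter_snoc:
  "torus_iter (is @ [i]) F z =
   torus_iter is (\<lambda>y. contour_integral (circlepath 0 1) (\<lambda>\<zeta>. F (vec_upd y i \<zeta>))) z"
  by (induction "is" arbitrary: z) simp_all

lemma torus_iter_cong_strong:
  fixes F G :: "complex^'n \<Rightarrow> complex" and z :: "complex^'n"
  assumes "\<And>y. (\<forall>l\<in>set is. norm (y$l) = 1) \<Longrightarrow> (\<forall>l. l \<notin> set is \<longrightarrow> y$l = z$l) \<Longrightarrow> F y = G y"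
  shows "torus_iter is F z = torus_iter is G z"
  using assms
proof (induction "is" arbitrary: z)
  case Nil
  then show ?case by simp
next
  case (Cons k "is")
  show ?case
  proof (simp, rule contour_integral_eq)
    fix \<zeta> assume "\<zeta> \<in> path_image (circlepath 0 1)"
    then have n: "norm \<zeta> = 1" by simp
    show "torus_iter is F (vec_upd z k \<zeta>) = torus_iter is G (vec_upd z k \<zeta>)"
    proof (rule Cons.IH)
      fix y assume y1: "\<forall>l\<in>set is. norm (y$l) = 1" and y2: "\<forall>l. l \<notin> set is \<longrightarrow> y$l = vec_upd z k \<zeta> $ l"
      show "F y = G y"
        apply (rule Cons.prems)
        using y1 y2 n by (auto split: if_splits)
    qed
  qed
qed

lemma torus_iter_cong:
  fixes F G :: "complex^'n \<Rightarrow> complex" and z :: "complex^'n"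
  assumes "\<And>y. (\<forall>l\<in>set is. norm (y$l) = 1) \<Longrightarrow> F y = G y"
  shows "torus_iter is F z = torus_iter is G z"
  by (rule torus_iter_cong_strong) (use assms in blast)

lemma mulv_upd:
  fixes A :: "complex^'n^'n"
  shows "(A *v vec_upd y i \<zeta>) $ j = A$j$i * \<zeta> + (\<Sum>l\<in>UNIV-{i}. A$j$l * y$l)"
proof -
  have "(A *v vec_upd y i \<zeta>) $ j = (\<Sum>l\<in>UNIV. A$j$l * vec_upd y i \<zeta> $ l)"
    by (simp add: matrix_vector_mult_def)
  also have "\<dots> = A$j$i * \<zeta> + (\<Sum>l\<in>UNIV-{i}. A$j$l * vec_upd y i \<zeta> $ l)"
    by (subst sum.remove[of _ i]) auto
  also have "(\<Sum>l\<in>UNIV-{i}. A$j$l * vec_upd y i \<zeta> $ l) = (\<Sum>l\<in>UNIV-{i}. A$j$l * y$l)"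
    by (rule sum.cong) auto
  finally show ?thesis .
qed

lemma holo_slice:
  fixes g :: "complex^'n \<Rightarrow> complex"
  assumes "holomorphic_cn g"
  shows "(\<lambda>\<zeta>. g (vec_upd z i \<zeta>)) field_differentiable at w"
proof -
  obtain L where L: "(g has_derivative L) (at (vec_upd z i w))" and lin: "\<forall>(c::complex) v. L (c *s v) = c * L v"
    using assms unfolding holomorphic_cn_def by blast
  define e :: "complex^'n" where "e = (\<chi> j. if j = i then 1 else 0)"
  have eq: "vec_upd z i \<zeta> = vec_upd z i 0 + \<zeta> *s e" for \<zeta>
    by (simp add: vec_eq_iff e_def)
  have lin_e: "linear (\<lambda>h::complex. h *s e)"
    by (rule linearI) (simp_all add: vec_eq_iff distrib_right)
  have d0: "((\<lambda>\<zeta>. vec_upd z i 0 + \<zeta> *s e) has_derivative (\<lambda>h. 0 + h *s e)) (at w)"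
    by (rule has_derivative_add[OF has_derivative_const linear_imp_has_derivative[OF lin_e]])
  have d1: "((\<lambda>\<zeta>. vec_upd z i 0 + \<zeta> *s e) has_derivative (\<lambda>h. h *s e)) (at w)"
    using d0 by (simp only: add_0_left)
  have L': "(g has_derivative L) (at (vec_upd z i 0 + w *s e))"
    using L unfolding eq[of w] .
  have c: "((\<lambda>\<zeta>. g (vec_upd z i 0 + \<zeta> *s e)) has_derivative (\<lambda>h. L (h *s e))) (at w)"
    using has_derivative_compose[OF d1 L'] by (simp add: o_def)
  have fe: "(\<lambda>\<zeta>. g (vec_upd z i \<zeta>)) = (\<lambda>\<zeta>. g (vec_upd z i 0 + \<zeta> *s e))"
    by (intro ext arg_cong[where f=g]) (simp add: vec_eq_iff e_def)
  have "(\<lambda>h. L (h *s e)) = (\<lambda>h. L e * h)"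
    using lin by (simp add: mult.commute)
  with c fe have "((\<lambda>\<zeta>. g (vec_upd z i \<zeta>)) has_derivative (\<lambda>h. L e * h)) (at w)"
    by simp
  then show ?thesis
    unfolding field_differentiable_def has_field_derivative_def by blast
qed



definition schur :: "complex^'n^'n \<Rightarrow> 'n \<Rightarrow> complex^'n^'n" where
  "schur A i = (\<chi> j l. if j = i then (if l = i then 1 else 0) else if l = i then 0
       else A$j$l - A$j$i * A$i$l / A$i$i)"

lemma det_col_replace:
  fixes x :: "complex^'n"
  shows "det (\<chi> r s. if s = k then x$r else (if r = s then 1 else 0)) = x$k"
proof -
  have "det ((\<chi> r s. if s = k then (mat 1 *v x)$r else (mat 1 :: complex^'n^'n)$r$s)) = x$k * det (mat 1 :: complex^'n^'n)"
    by (rule cramer_lemma)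
  moreover have "(\<chi> r s. if s = k then (mat 1 *v x)$r else (mat 1 :: complex^'n^'n)$r$s) = (\<chi> r s. if s = k then x$r else (if r = s then 1 else 0))"
    by (simp add: vec_eq_iff) (simp add: mat_def)
  ultimately show ?thesis by simp
qed

lemma det_schur:
  fixes A :: "complex^'n^'n"
  assumes a: "A$i$i \<noteq> 0"
  shows "det A = A$i$i * det (schur A i)"
proof -
  define Lm :: "complex^'n^'n" where "Lm = (\<chi> j l. (if l = j then 1 else 0) + (if l = i \<and> j \<noteq> i then A$j$i / A$i$i else 0))"
  define E :: "complex^'n^'n" where "E = (\<chi> j l. if j = i then A$i$l else (if l = j then 1 else 0))"
  define C :: "complex^'n^'n" where "C = (\<chi> j l. if j = i then A$i$l else if l = i then 0 else A$j$l - A$j$i * A$i$l / A$i$i)"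
  have C: "schur A i ** E = C"
    unfolding vec_eq_iff
  proof (intro allI)
    fix j l
    have "(schur A i ** E) $ j $ l = (\<Sum>m\<in>UNIV. schur A i $ j $ m * E $ m $ l)"
      by (simp add: matrix_matrix_mult_def)
    also have "\<dots> = (\<Sum>m\<in>UNIV. if m = (if j = i then i else l) then C $ j $ l else 0)"
    proof (rule sum.cong[OF refl])
      fix m
      show "schur A i $ j $ m * E $ m $ l = (if m = (if j = i then i else l) then C $ j $ l else 0)"
        by (cases "j = i"; cases "m = i"; cases "l = i"; cases "m = l") (simp_all add: schur_def E_def C_def)
    qed
    also have "\<dots> = C $ j $ l" by simp
    finally show "(schur A i ** E) $ j $ l = C $ j $ l" .
  qed
  have LC: "Lm ** C = A"
    unfolding vec_eq_iff
  proof (intro allI)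
    fix j l
    have "(Lm ** C) $ j $ l = (\<Sum>m\<in>UNIV. ((if m = j then 1 else 0) + (if m = i \<and> j \<noteq> i then A$j$i / A$i$i else 0)) * C$m$l)"
      by (simp add: matrix_matrix_mult_def Lm_def)
    also have "\<dots> = (\<Sum>m\<in>UNIV. (if m = j then C$j$l else 0) + (if m = i then (if j \<noteq> i then A$j$i / A$i$i * C$i$l else 0) else 0))"
      by (rule sum.cong[OF refl]) (auto simp: distrib_right)
    also have "\<dots> = C$j$l + (if j \<noteq> i then A$j$i / A$i$i * C$i$l else 0)"
      by (simp only: sum.distrib sum.delta finite UNIV_I if_True)
    also have "\<dots> = A$j$l"
      using a by (auto simp: C_def)
    finally show "(Lm ** C) $ j $ l = A $ j $ l" .
  qed
  have dL: "det Lm = 1"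
  proof -
    have "Lm = (\<chi> r s. if s = i then (\<chi> r. if r = i then 1 else A$r$i / A$i$i)$r else (if r = s then 1 else 0))"
      by (auto simp: Lm_def vec_eq_iff)
    then show ?thesis using det_col_replace[of i "(\<chi> r. if r = i then 1 else A$r$i / A$i$i) :: complex^'n"] by simp
  qed
  have dE: "det E = A$i$i"
  proof -
    have "E = transpose (\<chi> r s. if s = i then (A$i)$r else (if r = s then 1 else 0))"
      by (auto simp: E_def transpose_def vec_eq_iff)
    then show ?thesis using det_col_replace[of i "A$i"] by simp
  qed
  have "det A = det Lm * (det (schur A i) * det E)"
    using LC C by (metis det_mul)
  then show ?thesis using dL dE by simp
qed



definition good :: "'n set \<Rightarrow> complex^'n^'n \<Rightarrow> bool" where
  "good I A \<longleftrightarrow> (\<forall>j l. j \<notin> I \<longrightarrow> A$j$l = (if l = j then 1 else 0)) \<and>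
     (\<forall>j l. j \<in> I \<longrightarrow> l \<notin> I \<longrightarrow> A$j$l = 0) \<and>
     (\<forall>j\<in>I. (\<Sum>l\<in>UNIV-{j}. norm (A$j$l)) < norm (A$j$j))"

lemma good_diag_nz:
  fixes A :: "complex^'n^'n"
  assumes "good I A" "i \<in> I" shows "A$i$i \<noteq> 0"
proof -
  have "0 \<le> (\<Sum>l\<in>UNIV-{i}. norm (A$i$l))" by (rule sum_nonneg) simp
  with assms show ?thesis unfolding good_def by force
qed

lemma good_schur:
  fixes A :: "complex^'n^'n"
  assumes g: "good I A" and iI: "i \<in> I"
  shows "good (I - {i}) (schur A i)"
proof -
  let ?a = "A$i$i"
  have a: "?a \<noteq> 0" using good_diag_nz[OF g iI] .
  have r1: "\<forall>j l. j \<notin> I - {i} \<longrightarrow> schur A i $j$l = (if l = j then 1 else 0)"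
  proof (intro allI impI)
    fix j l assume j: "j \<notin> I - {i}"
    show "schur A i $j$l = (if l = j then 1 else 0)"
    proof (cases "j = i")
      case True then show ?thesis by (simp add: schur_def)
    next
      case False
      then have jI: "j \<notin> I" using j by auto
      have "A$j$i = 0" using g jI False unfolding good_def by auto
      moreover have "A$j$l = (if l = j then 1 else 0)" using g jI unfolding good_def by auto
      ultimately show ?thesis using False by (cases "l = j") (auto simp: schur_def)
    qed
  qed
  have r2: "\<forall>j l. j \<in> I - {i} \<longrightarrow> l \<notin> I - {i} \<longrightarrow> schur A i $j$l = 0"
  proof (intro allI impI)
    fix j l assume j: "j \<in> I - {i}" and l: "l \<notin> I - {i}"
    show "schur A i $j$l = 0"
    proof (cases "l = i")
      case True then show ?thesis using j by (simp add: schur_def)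
    next
      case False
      then have "l \<notin> I" using l by auto
      then have "A$j$l = 0" "A$i$l = 0" using g j iI unfolding good_def by auto
      then show ?thesis using j False by (simp add: schur_def)
    qed
  qed
  have r3: "\<forall>j\<in>I-{i}. (\<Sum>l\<in>UNIV-{j}. norm (schur A i$j$l)) < norm (schur A i$j$j)"
  proof
    fix j assume j: "j \<in> I - {i}"
    then have ji: "j \<noteq> i" and jI: "j \<in> I" by auto
    define S where "S = (\<Sum>l\<in>UNIV-{i,j}. norm (A$j$l))"
    define T where "T = (\<Sum>l\<in>UNIV-{i,j}. norm (A$i$l))"
    have sj: "(\<Sum>l\<in>UNIV-{j}. norm (A$j$l)) = norm (A$j$i) + S"
      unfolding S_def using ji by (subst sum.remove[of _ i]) (auto intro!: sum.cong)
    have si: "(\<Sum>l\<in>UNIV-{i}. norm (A$i$l)) = norm (A$i$j) + T"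
      unfolding T_def using ji by (subst sum.remove[of _ j]) (auto intro!: sum.cong)
    have dj: "norm (A$j$i) + S < norm (A$j$j)" using g jI sj unfolding good_def by auto
    have di: "norm (A$i$j) + T < norm ?a" using g iI si unfolding good_def by auto
    have "(\<Sum>l\<in>UNIV-{j}. norm (schur A i$j$l)) = (\<Sum>l\<in>UNIV-{i,j}. norm (schur A i$j$l))"
      using ji by (subst sum.remove[of _ i]) (auto simp: schur_def intro!: sum.cong)
    also have "\<dots> = (\<Sum>l\<in>UNIV-{i,j}. norm (A$j$l - A$j$i * A$i$l / ?a))"
      using ji by (intro sum.cong) (auto simp: schur_def)
    also have "\<dots> \<le> (\<Sum>l\<in>UNIV-{i,j}. norm (A$j$l) + norm (A$j$i) / norm ?a * norm (A$i$l))"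
      by (intro sum_mono order_trans[OF norm_triangle_ineq4]) (simp add: norm_mult norm_divide)
    also have "\<dots> = S + norm (A$j$i) / norm ?a * T"
      by (simp add: S_def T_def sum.distrib sum_distrib_left)
    finally have le: "(\<Sum>l\<in>UNIV-{j}. norm (schur A i$j$l)) \<le> S + norm (A$j$i) / norm ?a * T" .
    have na: "norm ?a > 0" using a by simp
    have q: "(T + norm (A$i$j)) / norm ?a \<le> 1" using di na by simp
    have "norm (A$j$i) * ((T + norm (A$i$j)) / norm ?a) \<le> norm (A$j$i)"
      using mult_left_mono[OF q, of "norm (A$j$i)"] by simp
    then have "S + norm (A$j$i) / norm ?a * T < norm (A$j$j) - norm (A$j$i) * norm (A$i$j) / norm ?a"
    proof -
      have "norm (A$j$i) / norm ?a * T + norm (A$j$i) * norm (A$i$j) / norm ?a = norm (A$j$i) * ((T + norm (A$i$j)) / norm ?a)"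
        by (simp add: add_divide_distrib distrib_left)
      then show ?thesis using dj \<open>norm (A$j$i) * ((T + norm (A$i$j)) / norm ?a) \<le> norm (A$j$i)\<close> by linarith
    qed
    also have "\<dots> \<le> norm (A$j$j - A$j$i * A$i$j / ?a)"
      using norm_triangle_ineq2[of "A$j$j" "A$j$i * A$i$j / ?a"] by (simp add: norm_mult norm_divide)
    also have "\<dots> = norm (schur A i$j$j)" using ji by (simp add: schur_def)
    finally show "(\<Sum>l\<in>UNIV-{j}. norm (schur A i$j$l)) < norm (schur A i$j$j)" using le by linarith
  qed
  show ?thesis unfolding good_def using r1 r2 r3 by blast
qed



lemma schur_mulv:
  fixes A :: "complex^'n^'n"
  assumes "j \<noteq> i"
  shows "(schur A i *v y)$j = A$j$i * (-(\<Sum>l\<in>UNIV-{i}. A$i$l * y$l) / A$i$i) + (\<Sum>l\<in>UNIV-{i}. A$j$l * y$l)"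
proof -
  have "(schur A i *v y)$j = (\<Sum>l\<in>UNIV. schur A i$j$l * y$l)"
    by (simp add: matrix_vector_mult_def)
  also have "\<dots> = (\<Sum>l\<in>UNIV-{i}. schur A i$j$l * y$l)"
    using assms by (subst sum.remove[of _ i]) (auto simp: schur_def)
  also have "\<dots> = (\<Sum>l\<in>UNIV-{i}. A$j$l * y$l - A$j$i / A$i$i * (A$i$l * y$l))"
    using assms by (intro sum.cong) (auto simp: schur_def algebra_simps)
  also have "\<dots> = (\<Sum>l\<in>UNIV-{i}. A$j$l * y$l) - A$j$i / A$i$i * (\<Sum>l\<in>UNIV-{i}. A$i$l * y$l)"
    by (simp add: sum_subtractf sum_distrib_left)
  finally show ?thesis by (simp add: algebra_simps)
qed

lemma residue_step:
  fixes A :: "complex^'n^'n" and g :: "complex^'n \<Rightarrow> complex" and y :: "complex^'n"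
  assumes gd: "good I A" and iI: "i \<in> I" and hg: "holomorphic_cn g"
    and y: "\<forall>l\<in>I-{i}. norm (y$l) = 1" and fin: "finite I"
  shows "contour_integral (circlepath 0 1) (\<lambda>\<zeta>. g (vec_upd y i \<zeta>) / (\<Prod>j\<in>I. (A *v vec_upd y i \<zeta>)$j))
     = 2*pi*\<i> / A$i$i * g (vec_upd y i (-(\<Sum>l\<in>UNIV-{i}. A$i$l * y$l) / A$i$i)) / (\<Prod>j\<in>I-{i}. (schur A i *v y)$j)"
proof -
  define a where "a = A$i$i"
  have a: "a \<noteq> 0" unfolding a_def using good_diag_nz[OF gd iI] .
  define r where "r j = (\<Sum>l\<in>UNIV-{i}. A$j$l * y$l)" for j
  define c where "c = - r i / a"
  define D where "D j \<zeta> = A$j$i * \<zeta> + r j" for j \<zeta>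
  have bnd: "norm (A$j$l * y$l) \<le> norm (A$j$l)" if "j \<in> I" "l \<noteq> i" for j l
  proof (cases "l \<in> I")
    case True then show ?thesis using y that by (simp add: norm_mult)
  next
    case False then have "A$j$l = 0" using gd that unfolding good_def by auto
    then show ?thesis by simp
  qed
  have ri: "norm (r i) < norm a"
  proof -
    have "norm (r i) \<le> (\<Sum>l\<in>UNIV-{i}. norm (A$i$l * y$l))" unfolding r_def by (rule norm_sum)
    also have "\<dots> \<le> (\<Sum>l\<in>UNIV-{i}. norm (A$i$l))" by (intro sum_mono bnd iI) auto
    also have "\<dots> < norm a" using gd iI unfolding good_def a_def by auto
    finally show ?thesis .
  qed
  have c1: "norm c < 1" using ri a by (simp add: c_def norm_divide divide_less_eq)
  have rj: "norm (r j) > norm (A$j$i)" if j: "j \<in> I - {i}" for j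
  proof -
    have ji: "j \<noteq> i" and jI: "j \<in> I" using j by auto
    have rj_eq: "r j = A$j$j * y$j + (\<Sum>l\<in>UNIV-{i,j}. A$j$l * y$l)"
      unfolding r_def using ji by (subst sum.remove[of _ j]) (auto intro!: sum.cong)
    have "norm (\<Sum>l\<in>UNIV-{i,j}. A$j$l * y$l) \<le> (\<Sum>l\<in>UNIV-{i,j}. norm (A$j$l * y$l))" by (rule norm_sum)
    also have "\<dots> \<le> (\<Sum>l\<in>UNIV-{i,j}. norm (A$j$l))" by (intro sum_mono bnd jI) auto
    finally have s1: "norm (\<Sum>l\<in>UNIV-{i,j}. A$j$l * y$l) \<le> (\<Sum>l\<in>UNIV-{i,j}. norm (A$j$l))" .
    have sj: "(\<Sum>l\<in>UNIV-{j}. norm (A$j$l)) = norm (A$j$i) + (\<Sum>l\<in>UNIV-{i,j}. norm (A$j$l))"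
      using ji by (subst sum.remove[of _ i]) (auto intro!: sum.cong)
    have dj: "(\<Sum>l\<in>UNIV-{j}. norm (A$j$l)) < norm (A$j$j)" using gd jI unfolding good_def by auto
    have yj: "norm (A$j$j * y$j) = norm (A$j$j)" using y j by (simp add: norm_mult)
    have "norm (A$j$j * y$j) - norm (\<Sum>l\<in>UNIV-{i,j}. A$j$l * y$l) \<le> norm (r j)"
      unfolding rj_eq by (rule norm_diff_ineq)
    then show ?thesis using s1 sj dj yj by linarith
  qed
  have Dnz: "D j \<zeta> \<noteq> 0" if "j \<in> I - {i}" "norm \<zeta> \<le> 1" for j \<zeta>
  proof
    assume "D j \<zeta> = 0"
    then have "r j = - (A$j$i * \<zeta>)" unfolding D_def by (simp add: eq_neg_iff_add_eq_0 add.commute)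
    then have "norm (r j) = norm (A$j$i) * norm \<zeta>" by (simp add: norm_mult)
    also have "\<dots> \<le> norm (A$j$i)" using that(2) by (simp add: mult_left_le)
    finally show False using rj[OF that(1)] by simp
  qed
  define h where "h \<zeta> = g (vec_upd y i \<zeta>) / (\<Prod>j\<in>I-{i}. D j \<zeta>) / a" for \<zeta>
  have holo: "h holomorphic_on cball 0 1"
  proof -
    have g1: "(\<lambda>\<zeta>. g (vec_upd y i \<zeta>)) holomorphic_on cball 0 1"
      unfolding holomorphic_on_def using holo_slice[OF hg] field_differentiable_at_within by blast
    have p1: "(\<lambda>\<zeta>. \<Prod>j\<in>I-{i}. D j \<zeta>) holomorphic_on cball 0 1"
      unfolding D_def by (intro holomorphic_intros)
    show ?thesis unfolding h_def
      using Dnz fin by (intro holomorphic_intros g1 p1) auto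
  qed
  have cau: "((\<lambda>\<zeta>. h \<zeta> / (\<zeta> - c)) has_contour_integral (2 * of_real pi * \<i> * h c)) (circlepath 0 1)"
    by (rule Cauchy_integral_circlepath_simple[OF holo]) (use c1 in simp)
  have eqi: "g (vec_upd y i \<zeta>) / (\<Prod>j\<in>I. (A *v vec_upd y i \<zeta>)$j) = h \<zeta> / (\<zeta> - c)" for \<zeta>
  proof -
    have "(\<Prod>j\<in>I. (A *v vec_upd y i \<zeta>)$j) = (A *v vec_upd y i \<zeta>)$i * (\<Prod>j\<in>I-{i}. (A *v vec_upd y i \<zeta>)$j)"
      using fin iI by (rule prod.remove)
    also have "\<dots> = (a * (\<zeta> - c)) * (\<Prod>j\<in>I-{i}. D j \<zeta>)"
      using a by (simp add: mulv_upd D_def r_def c_def a_def algebra_simps)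
    finally show ?thesis unfolding h_def by (simp add: divide_divide_eq_left ac_simps)
  qed
  have "((\<lambda>\<zeta>. g (vec_upd y i \<zeta>) / (\<Prod>j\<in>I. (A *v vec_upd y i \<zeta>)$j)) has_contour_integral (2 * of_real pi * \<i> * h c)) (circlepath 0 1)"
    using cau eqi by simp
  then have ci: "contour_integral (circlepath 0 1) (\<lambda>\<zeta>. g (vec_upd y i \<zeta>) / (\<Prod>j\<in>I. (A *v vec_upd y i \<zeta>)$j)) = 2 * of_real pi * \<i> * h c"
    by (rule contour_integral_unique)
  have "(\<Prod>j\<in>I-{i}. D j c) = (\<Prod>j\<in>I-{i}. (schur A i *v y)$j)"
    by (intro prod.cong) (auto simp: schur_mulv D_def c_def r_def a_def)
  then show ?thesis unfolding ci h_def c_def r_def a_def by simp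
qed



lemma holo_comp:
  fixes g :: "complex^'n \<Rightarrow> complex" and \<sigma> :: "complex^'n \<Rightarrow> complex^'n"
  assumes hg: "holomorphic_cn g" and lin: "linear \<sigma>" and hom: "\<And>c v. \<sigma> (c *s v) = c *s \<sigma> v"
  shows "holomorphic_cn (\<lambda>z. K * g (\<sigma> z))"
  unfolding holomorphic_cn_def
proof
  fix z
  obtain L where L: "(g has_derivative L) (at (\<sigma> z))" and lL: "\<forall>(c::complex) v. L (c *s v) = c * L v"
    using hg unfolding holomorphic_cn_def by blast
  have "((\<lambda>z. g (\<sigma> z)) has_derivative (\<lambda>v. L (\<sigma> v))) (at z)"
    using has_derivative_compose[OF linear_imp_has_derivative[OF lin] L] by (simp add: o_def)
  then have "((\<lambda>z. K * g (\<sigma> z)) has_derivative (\<lambda>v. K * L (\<sigma> v))) (at z)"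
    by (rule has_derivative_mult_right)
  moreover have "\<forall>(c::complex) v. K * L (\<sigma> (c *s v)) = c * (K * L (\<sigma> v))"
    using lL hom by (simp add: algebra_simps)
  ultimately show "\<exists>L. ((\<lambda>z. K * g (\<sigma> z)) has_derivative L) (at z) \<and> (\<forall>(c::complex) v. L (c *s v) = c * L v)"
    by blast
qed

definition sig :: "complex^'n^'n \<Rightarrow> 'n \<Rightarrow> complex^'n \<Rightarrow> complex^'n" where
  "sig A i y = vec_upd y i (-(\<Sum>l\<in>UNIV-{i}. A$i$l * y$l) / A$i$i)"

lemma sig_linear: fixes A :: "complex^'n^'n" shows "linear (sig A i)"
proof (rule linearI)
  fix x y :: "complex^'n"
  have "(\<Sum>l\<in>UNIV-{i}. A$i$l * (x+y)$l) = (\<Sum>l\<in>UNIV-{i}. A$i$l * x$l) + (\<Sum>l\<in>UNIV-{i}. A$i$l * y$l)"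
    by (simp add: distrib_left sum.distrib)
  then show "sig A i (x + y) = sig A i x + sig A i y"
    by (simp add: vec_eq_iff sig_def add_divide_distrib diff_divide_distrib)
next
  fix r :: real and x :: "complex^'n"
  have cmp: "(r *\<^sub>R v)$l = complex_of_real r * v$l" for l and v :: "complex^'n"
    by (metis vector_scaleR_component scaleR_conv_of_real)
  have "(\<Sum>l\<in>UNIV-{i}. A$i$l * (r *\<^sub>R x)$l) = of_real r * (\<Sum>l\<in>UNIV-{i}. A$i$l * x$l)"
    by (simp add: cmp sum_distrib_left algebra_simps del: vector_scaleR_component)
  then show "sig A i (r *\<^sub>R x) = r *\<^sub>R sig A i x"
    by (simp add: vec_eq_iff sig_def cmp del: vector_scaleR_component)
qed

lemma sig_hom: "sig A i (c *s v) = c *s sig A i v"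
  by (auto simp: vec_eq_iff sig_def sum_distrib_left algebra_simps)

lemma sig_0: "sig A i 0 = 0"
  by (auto simp: vec_eq_iff sig_def)

lemma main:
  fixes "is" :: "'n::finite list" and A :: "complex^'n^'n" and g :: "complex^'n \<Rightarrow> complex"
  shows "distinct is \<Longrightarrow> good (set is) A \<Longrightarrow> holomorphic_cn g \<Longrightarrow>
    torus_iter is (\<lambda>z. g z / (\<Prod>j\<in>set is. (A *v z)$j)) 0 = (2*pi*\<i>)^(length is) * g 0 / det A"
proof (induction "is" arbitrary: A g rule: rev_induct)
  case Nil
  then have "A = mat 1" by (auto simp: good_def vec_eq_iff mat_def)
  then show ?case by simp
next
  case (snoc i "is")
  have iis: "i \<notin> set is" and dis: "distinct is" using snoc.prems(1) by auto
  have gd: "good (insert i (set is)) A" using snoc.prems(2) by simp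
  have iI: "i \<in> insert i (set is)" by simp
  define g' where "g' y = (2*pi*\<i> / A$i$i) * g (sig A i y)" for y
  have hg': "holomorphic_cn g'"
    unfolding g'_def by (rule holo_comp[OF snoc.prems(3) sig_linear sig_hom])
  have gd': "good (set is) (schur A i)"
    using good_schur[OF gd iI] iis by (simp add: insert_Diff_if)
  have IH: "torus_iter is (\<lambda>z. g' z / (\<Prod>j\<in>set is. (schur A i *v z)$j)) 0 = (2*pi*\<i>)^(length is) * g' 0 / det (schur A i)"
    by (rule snoc.IH[OF dis gd' hg'])
  have "torus_iter (is @ [i]) (\<lambda>z. g z / (\<Prod>j\<in>set (is @ [i]). (A *v z)$j)) 0
      = torus_iter is (\<lambda>y. contour_integral (circlepath 0 1) (\<lambda>\<zeta>. g (vec_upd y i \<zeta>) / (\<Prod>j\<in>insert i (set is). (A *v vec_upd y i \<zeta>)$j))) 0"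
    by (simp add: torus_iter_snoc)
  also have "\<dots> = torus_iter is (\<lambda>z. g' z / (\<Prod>j\<in>set is. (schur A i *v z)$j)) 0"
  proof (rule torus_iter_cong)
    fix y :: "complex^'n" assume y: "\<forall>l\<in>set is. norm (y$l) = 1"
    have "contour_integral (circlepath 0 1) (\<lambda>\<zeta>. g (vec_upd y i \<zeta>) / (\<Prod>j\<in>insert i (set is). (A *v vec_upd y i \<zeta>)$j))
      = 2*pi*\<i> / A$i$i * g (vec_upd y i (-(\<Sum>l\<in>UNIV-{i}. A$i$l * y$l) / A$i$i)) / (\<Prod>j\<in>insert i (set is)-{i}. (schur A i *v y)$j)"
      by (rule residue_step[OF gd iI snoc.prems(3)]) (use y in auto)
    also have "\<dots> = g' y / (\<Prod>j\<in>set is. (schur A i *v y)$j)"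
      using iis by (simp add: g'_def sig_def)
    finally show "contour_integral (circlepath 0 1) (\<lambda>\<zeta>. g (vec_upd y i \<zeta>) / (\<Prod>j\<in>insert i (set is). (A *v vec_upd y i \<zeta>)$j))
      = g' y / (\<Prod>j\<in>set is. (schur A i *v y)$j)" .
  qed
  also have "\<dots> = (2*pi*\<i>)^(length is) * g' 0 / det (schur A i)" by (rule IH)
  also have "\<dots> = (2*pi*\<i>)^(length (is @ [i])) * g 0 / det A"
    using det_schur[OF good_diag_nz[OF gd iI]] by (simp add: g'_def sig_0 field_simps)
  finally show ?case .
qed

lemma good_from_norm:
  fixes A :: "complex^'n^'n"
  assumes nb: "norm (A - mat 1) < 1 / real CARD('n)"
  shows "good UNIV A"
  unfolding good_def
proof (intro conjI ballI allI impI)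
  fix j :: 'n
  define B where "B = A - mat 1"
  have hB: "norm (B$j$l) \<le> norm B" for l
    using Finite_Cartesian_Product.norm_nth_le[of "B$j" l] Finite_Cartesian_Product.norm_nth_le[of B j] by linarith
  have k: "real CARD('n) > 0" by simp
  have "(\<Sum>l\<in>UNIV. norm (B$j$l)) \<le> of_nat (card (UNIV::'n set)) * norm B"
    by (rule sum_bounded_above) (use hB in auto)
  also have "\<dots> < real CARD('n) * (1 / real CARD('n))"
    using nb k unfolding B_def by (intro mult_strict_left_mono) auto
  also have "\<dots> = 1" using k by simp
  finally have s1: "(\<Sum>l\<in>UNIV. norm (B$j$l)) < 1" .
  have "(\<Sum>l\<in>UNIV. norm (B$j$l)) = norm (B$j$j) + (\<Sum>l\<in>UNIV-{j}. norm (B$j$l))"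
    by (subst sum.remove[of _ j]) auto
  also have "(\<Sum>l\<in>UNIV-{j}. norm (B$j$l)) = (\<Sum>l\<in>UNIV-{j}. norm (A$j$l))"
    by (intro sum.cong) (auto simp: B_def mat_def)
  also have "norm (B$j$j) = norm (A$j$j - 1)" by (simp add: B_def mat_def)
  finally have s2: "norm (A$j$j - 1) + (\<Sum>l\<in>UNIV-{j}. norm (A$j$l)) < 1" using s1 by simp
  have "norm (1::complex) \<le> norm (A$j$j) + norm (A$j$j - 1)"
    using norm_triangle_ineq4[of "A$j$j" "A$j$j - 1"] by simp
  then show "(\<Sum>l\<in>UNIV-{j}. norm (A$j$l)) < norm (A$j$j)" using s2 by simp
qed auto

theorem theorem3:
  fixes A :: "complex^'n^'n" and f :: "complex^'n \<Rightarrow> complex" and ord :: "'n list"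
  assumes "distinct ord" and "set ord = UNIV"
    and "norm (A - mat 1) < 1 / real CARD('n)"
    and "holomorphic_cn f"
  shows "f 0 / det A =
    torus_integral ord (\<lambda>z. f z / (\<Prod>j\<in>UNIV. (A *v z) $ j)) / (2 * pi * \<i>) ^ CARD('n)"
proof -
  have d: "distinct (rev ord)" using assms(1) by simp
  have s: "set (rev ord) = UNIV" using assms(2) by simp
  have len: "length (rev ord) = CARD('n)"
    using distinct_card[OF assms(1)] assms(2) by simp
  have gd: "good (set (rev ord)) A" using good_from_norm[OF assms(3)] s by simp
  have "torus_iter (rev ord) (\<lambda>z. f z / (\<Prod>j\<in>set (rev ord). (A *v z)$j)) 0 = (2*pi*\<i>)^(length (rev ord)) * f 0 / det A"
    by (rule main[OF d gd assms(4)])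
  then have "torus_integral ord (\<lambda>z. f z / (\<Prod>j\<in>UNIV. (A *v z) $ j)) = (2*pi*\<i>)^CARD('n) * f 0 / det A"
    unfolding torus_integral_def using s len by simp
  then show ?thesis by simp
qed

end
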